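(* Let $(J,D)\in\mathcal{N}(n)$ be a threshold-linear network such that $-D+J$ is a symmetric matrix of rank $1$. Then $(J,D)$ is maximally flexible in $\mathcal{N}(n)$ and has flexibility $2^n-n-1$.
   Context: A threshold-linear network $(J,D)$ on $n$ neurons: $J$ real $n\times n$, $D=\operatorname{diag}(\tau_1^{-1},\dots,\tau_n^{-1})$ with $\tau_i>0$, $-D+J$ with strictly negative diagonal, dynamics $\dot x=-Dx+[Jx+b]_+$ ($x\in\mathbb{R}^n_{\ge0}$, $b\in\mathbb{R}^n$ constant, $[y]_+=\max(y,0)$ coordinatewise); $\mathcal{N}(n)$ is the set of all such networks (every subset of $\{1,\dots,n\}$ is a clique). A non-empty $\sigma$ is a stable set if for some $b$ there is an asymptotically stable fixed point $x^*$ with $\{i:x^*_i>0\}=\sigma$; a marginal set if it is not stable but for some $b$ there is a stable fixed point with support $\sigma$; an unstable set otherwise. An $\varepsilon$-perturbation is a real $n\times n$ matrix $A$ with all $|A_{ij}|\le\varepsilon$. A maximally stable clique is a stable set not properly contained in another stable set; a minimally unstable clique is an unstable set not properly containing another unstable set. $\sigma$ is a flexible clique of $(J,D)$ if for every $\varepsilon>0$ there exist $\varepsilon$-perturbations $A_s,A_u$ such that $\sigma$ is a maximally stable clique of $(J+A_s,D)$ and a minimally unstable clique of $(J+A_u,D)$. The flexibility is the number of flexible cliques; $(J,D)$ is maximally flexible in $\mathcal{N}(n)$ if its flexibility equals the maximum flexibility over $\mathcal{N}(n)$. *)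

theory Defs
  imports "HOL-Analysis.Analysis"
begin

text \<open>Threshold-linear networks on n neurons; the neurons are indexed by a finite type 'n,
  so n = CARD('n). Matrices are real^'n^'n, vectors real^'n.\<close>

definition tln_network :: "real^'n^'n \<Rightarrow> real^'n^'n \<Rightarrow> bool" where
  "tln_network J D \<longleftrightarrow>
     (\<forall>i j. i \<noteq> j \<longrightarrow> D $ i $ j = 0) \<and> (\<forall>i. D $ i $ i > 0) \<and>
     (\<forall>i. (J - D) $ i $ i < 0)"

definition relu :: "real^'n \<Rightarrow> real^'n" where
  "relu y = (\<chi> i. max (y $ i) 0)"

definition tln_field :: "real^'n^'n \<Rightarrow> real^'n^'n \<Rightarrow> real^'n \<Rightarrow> real^'n \<Rightarrow> real^'n" where
  "tln_field J D b x = - (D *v x) + relu (J *v x + b)"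

definition nonneg_vec :: "real^'n \<Rightarrow> bool" where
  "nonneg_vec x \<longleftrightarrow> (\<forall>i. x $ i \<ge> 0)"

definition tln_solution ::
  "real^'n^'n \<Rightarrow> real^'n^'n \<Rightarrow> real^'n \<Rightarrow> real^'n \<Rightarrow> (real \<Rightarrow> real^'n) \<Rightarrow> bool" where
  "tln_solution J D b x0 x \<longleftrightarrow> x 0 = x0 \<and>
     (\<forall>t\<ge>0. (x has_vector_derivative tln_field J D b (x t)) (at t within {0..}))"

definition fixed_point :: "real^'n^'n \<Rightarrow> real^'n^'n \<Rightarrow> real^'n \<Rightarrow> real^'n \<Rightarrow> bool" where
  "fixed_point J D b xs \<longleftrightarrow> nonneg_vec xs \<and> tln_field J D b xs = 0"

definition lyapunov_stable :: "real^'n^'n \<Rightarrow> real^'n^'n \<Rightarrow> real^'n \<Rightarrow> real^'n \<Rightarrow> bool" where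
  "lyapunov_stable J D b xs \<longleftrightarrow> fixed_point J D b xs \<and>
     (\<forall>e>0. \<exists>d>0. \<forall>x0 x. nonneg_vec x0 \<and> dist x0 xs < d \<and> tln_solution J D b x0 x \<longrightarrow>
        (\<forall>t\<ge>0. dist (x t) xs < e))"

definition asymptotically_stable :: "real^'n^'n \<Rightarrow> real^'n^'n \<Rightarrow> real^'n \<Rightarrow> real^'n \<Rightarrow> bool" where
  "asymptotically_stable J D b xs \<longleftrightarrow> lyapunov_stable J D b xs \<and>
     (\<exists>d>0. \<forall>x0 x. nonneg_vec x0 \<and> dist x0 xs < d \<and> tln_solution J D b x0 x \<longrightarrow>
        (x \<longlongrightarrow> xs) at_top)"

definition supp :: "real^'n \<Rightarrow> 'n set" where
  "supp x = {i. x $ i > 0}"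

definition stable_set :: "real^'n^'n \<Rightarrow> real^'n^'n \<Rightarrow> 'n set \<Rightarrow> bool" where
  "stable_set J D \<sigma> \<longleftrightarrow> \<sigma> \<noteq> {} \<and>
     (\<exists>b xs. asymptotically_stable J D b xs \<and> supp xs = \<sigma>)"

definition marginal_set :: "real^'n^'n \<Rightarrow> real^'n^'n \<Rightarrow> 'n set \<Rightarrow> bool" where
  "marginal_set J D \<sigma> \<longleftrightarrow> \<sigma> \<noteq> {} \<and> \<not> stable_set J D \<sigma> \<and>
     (\<exists>b xs. lyapunov_stable J D b xs \<and> supp xs = \<sigma>)"

definition unstable_set :: "real^'n^'n \<Rightarrow> real^'n^'n \<Rightarrow> 'n set \<Rightarrow> bool" where
  "unstable_set J D \<sigma> \<longleftrightarrow> \<sigma> \<noteq> {} \<and> \<not> stable_set J D \<sigma> \<and> \<not> marginal_set J D \<sigma>"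

definition maximally_stable :: "real^'n^'n \<Rightarrow> real^'n^'n \<Rightarrow> 'n set \<Rightarrow> bool" where
  "maximally_stable J D \<sigma> \<longleftrightarrow> stable_set J D \<sigma> \<and> (\<forall>\<tau>. \<sigma> \<subset> \<tau> \<longrightarrow> \<not> stable_set J D \<tau>)"

definition minimally_unstable :: "real^'n^'n \<Rightarrow> real^'n^'n \<Rightarrow> 'n set \<Rightarrow> bool" where
  "minimally_unstable J D \<sigma> \<longleftrightarrow> unstable_set J D \<sigma> \<and> (\<forall>\<tau>. \<tau> \<subset> \<sigma> \<longrightarrow> \<not> unstable_set J D \<tau>)"

definition perturbation :: "real \<Rightarrow> real^'n^'n \<Rightarrow> bool" where
  "perturbation e A \<longleftrightarrow> (\<forall>i j. \<bar>A $ i $ j\<bar> \<le> e)"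

definition flexible_clique :: "real^'n^'n \<Rightarrow> real^'n^'n \<Rightarrow> 'n set \<Rightarrow> bool" where
  "flexible_clique J D \<sigma> \<longleftrightarrow>
     (\<forall>e>0. \<exists>As Au. perturbation e As \<and> perturbation e Au \<and>
        maximally_stable (J + As) D \<sigma> \<and> minimally_unstable (J + Au) D \<sigma>)"

definition flexibility :: "real^'n^'n \<Rightarrow> real^'n^'n \<Rightarrow> nat" where
  "flexibility J D = card {\<sigma>. flexible_clique J D \<sigma>}"

definition maximally_flexible :: "real^'n^'n \<Rightarrow> real^'n^'n \<Rightarrow> bool" where
  "maximally_flexible J D \<longleftrightarrow> tln_network J D \<and>
     flexibility J D = Max {flexibility J' D' | (J' :: real^'n^'n) D'. tln_network J' D'}"

end

theory Submission
  imports Defs "HOL-Real_Asymp.Real_Asymp"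
begin


primrec picard :: "('a::banach \<Rightarrow> 'a) \<Rightarrow> 'a \<Rightarrow> nat \<Rightarrow> real \<Rightarrow> 'a" where
  "picard f x0 0 = (\<lambda>t. x0)"
| "picard f x0 (Suc k) = (\<lambda>t. x0 + integral {0..t} (\<lambda>s. f (picard f x0 k s)))"

lemma lip_cont:
  fixes f :: "'a::banach \<Rightarrow> 'a"
  assumes lip: "\<And>x y. norm (f x - f y) \<le> L * norm (x - y)" and "L \<ge> 0"
  shows "continuous_on UNIV f"
proof -
  show ?thesis unfolding continuous_on_iff
  proof (intro ballI allI impI)
    fix x and e :: real assume "e > 0"
    show "\<exists>d>0. \<forall>x'\<in>UNIV. dist x' x < d \<longrightarrow> dist (f x') (f x) < e"
    proof (rule exI[of _ "e / (L+1)"], intro conjI ballI impI)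
      show "e/(L+1) > 0" using \<open>e>0\<close> \<open>L\<ge>0\<close> by simp
      fix x' assume "dist x' x < e/(L+1)"
      hence "dist (f x') (f x) \<le> L * dist x' x" using lip by (simp add: dist_norm)
      also have "\<dots> \<le> (L+1) * dist x' x" by (simp add: distrib_right)
      also have "\<dots> < e" using \<open>dist x' x < e/(L+1)\<close> \<open>L\<ge>0\<close>
        by (simp add: field_simps)
      finally show "dist (f x') (f x) < e" .
    qed
  qed
qed

lemma picard_cont:
  fixes f :: "'a::banach \<Rightarrow> 'a"
  assumes fc: "continuous_on UNIV f"
  shows "T \<ge> 0 \<Longrightarrow> continuous_on {0..T} (picard f x0 k)"
proof (induction k arbitrary: T)
  case 0 then show ?case by simp
next
  case (Suc k)
  have c: "continuous_on {0..T} (\<lambda>s. f (picard f x0 k s))"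
    by (rule continuous_on_compose2[OF fc Suc.IH[OF Suc.prems]]) auto
  have "continuous_on {0..T} (\<lambda>u. integral {0..u} (\<lambda>s. f (picard f x0 k s)))"
    unfolding continuous_on_eq_continuous_within
    using integral_has_vector_derivative[OF c] 
    by (meson has_vector_derivative_continuous)
  then show ?case by (simp add: continuous_on_add)
qed

lemma int_pow:
  fixes t c :: real
  assumes "t \<ge> 0"
  shows "((\<lambda>s. c * s^k) has_integral c * t^(Suc k) / Suc k) {0..t}"
proof -
  have "((\<lambda>s. c * s^k) has_integral (c * t^(Suc k) / Suc k - c * 0^(Suc k) / Suc k)) {0..t}"
  proof (rule fundamental_theorem_of_calculus)
    show "0 \<le> t" by fact
    fix s assume "s \<in> {0..t}"
    have "((\<lambda>s. c * s^(Suc k) / Suc k) has_real_derivative c * s^k) (at s within {0..t})"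
      by (rule derivative_eq_intros refl | simp)+
    then show "((\<lambda>s. c * s^(Suc k) / Suc k) has_vector_derivative c * s^k) (at s within {0..t})"
      by (simp add: has_real_derivative_iff_has_vector_derivative)
  qed
  then show ?thesis by simp
qed

lemma picard_bound:
  fixes f :: "'a::banach \<Rightarrow> 'a"
  assumes lip: "\<And>x y. norm (f x - f y) \<le> L * norm (x - y)" and L: "L \<ge> 0"
  shows "t \<ge> 0 \<Longrightarrow> norm (picard f x0 (Suc k) t - picard f x0 k t) \<le> norm (f x0) * L^k * t^(Suc k) / fact (Suc k)"
proof (induction k arbitrary: t)
  case 0
  then show ?case by (simp add: integral_const_real)
next
  case (Suc k)
  have fc: "continuous_on UNIV f" by (rule lip_cont[OF lip L])
  have c: "\<And>j. continuous_on {0..t} (\<lambda>s. f (picard f x0 j s))"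
    by (rule continuous_on_compose2[OF fc picard_cont[OF fc Suc.prems]]) auto
  have "picard f x0 (Suc (Suc k)) t - picard f x0 (Suc k) t
       = integral {0..t} (\<lambda>s. f (picard f x0 (Suc k) s) - f (picard f x0 k s))"
    using integral_diff[OF integrable_continuous_real[OF c[of "Suc k"]] integrable_continuous_real[OF c[of k]]]
    by (simp del: picard.simps add: picard.simps(2)[of f x0 "Suc k"] picard.simps(2)[of f x0 k])
  also have "norm \<dots> \<le> integral {0..t} (\<lambda>s. (L * norm (f x0) * L^k / fact (Suc k)) * s^(Suc k))"
  proof (rule integral_norm_bound_integral)
    show "(\<lambda>s. f (picard f x0 (Suc k) s) - f (picard f x0 k s)) integrable_on {0..t}"
      by (intro integrable_continuous_real continuous_on_diff c)
    show "(\<lambda>s. (L * norm (f x0) * L^k / fact (Suc k)) * s^(Suc k)) integrable_on {0..t}"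
      by (intro integrable_continuous_real continuous_intros)
    fix s assume s: "s \<in> {0..t}"
    have "norm (f (picard f x0 (Suc k) s) - f (picard f x0 k s)) \<le> L * norm (picard f x0 (Suc k) s - picard f x0 k s)"
      by (rule lip)
    also have "\<dots> \<le> L * (norm (f x0) * L^k * s^(Suc k) / fact (Suc k))"
      using Suc.IH[of s] s L by (intro mult_left_mono) auto
    finally show "norm (f (picard f x0 (Suc k) s) - f (picard f x0 k s)) \<le> (L * norm (f x0) * L^k / fact (Suc k)) * s^(Suc k)"
      by simp
  qed
  also have "\<dots> = (L * norm (f x0) * L^k / fact (Suc k)) * t^(Suc (Suc k)) / Suc (Suc k)"
    using int_pow[OF Suc.prems, of "L * norm (f x0) * L^k / fact (Suc k)" "Suc k"]
    by (rule integral_unique)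
  also have "\<dots> = norm (f x0) * L^(Suc k) * t^(Suc (Suc k)) / fact (Suc (Suc k))"
    by (simp add: field_simps)
  finally show ?case .
qed

lemma ode_exists:
  fixes f :: "'a::banach \<Rightarrow> 'a"
  assumes lip: "\<And>x y. norm (f x - f y) \<le> L * norm (x - y)" and L: "L \<ge> 0"
  shows "\<exists>x. x 0 = x0 \<and> (\<forall>t\<ge>0. (x has_vector_derivative f (x t)) (at t within {0..}))"
proof -
  define P where "P = picard f x0"
  define B where "B = norm (f x0)"
  define x where "x = (\<lambda>t. x0 + suminf (\<lambda>i. P (Suc i) t - P i t))"
  have fc: "continuous_on UNIV f" by (rule lip_cont[OF lip L])
  have Pc: "\<And>T k. T \<ge> 0 \<Longrightarrow> continuous_on {0..T} (P k)"
    unfolding P_def by (rule picard_cont[OF fc])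
  have P0: "P 0 t = x0" for t by (simp add: P_def)
  have tel: "(\<Sum>i<n. P (Suc i) t - P i t) = P n t - x0" for n t
    using sum_lessThan_telescope[of "\<lambda>i. P i t" n] P0 by simp
  have ul: "uniform_limit {0..T} P x sequentially" if T: "T \<ge> 0" for T
  proof -
    define M where "M = (\<lambda>i. B * T * (inverse (fact i) * (L*T)^i))"
    have sM: "summable M" unfolding M_def by (intro summable_mult summable_exp)
    have bd: "norm (P (Suc i) t - P i t) \<le> M i" if t: "t \<in> {0..T}" for i t
    proof -
      have "norm (P (Suc i) t - P i t) \<le> B * L^i * t^(Suc i) / fact (Suc i)"
        using picard_bound[OF lip L, of t x0 i] t unfolding P_def B_def by auto
      also have "\<dots> \<le> B * L^i * T^(Suc i) / fact (Suc i)"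
        using t L unfolding B_def by (intro divide_right_mono mult_left_mono power_mono) auto
      also have "\<dots> \<le> B * L^i * T^(Suc i) / fact i"
        using t L unfolding B_def
        by (intro divide_left_mono mult_nonneg_nonneg zero_le_power fact_mono) (auto simp: fact_gt_zero)
      also have "\<dots> = M i" unfolding M_def by (simp add: field_simps power_mult_distrib)
      finally show ?thesis .
    qed
    have "uniform_limit {0..T} (\<lambda>n t. \<Sum>i<n. P (Suc i) t - P i t) (\<lambda>t. suminf (\<lambda>i. P (Suc i) t - P i t)) sequentially"
      by (rule Weierstrass_m_test[OF bd sM])
    then have "uniform_limit {0..T} (\<lambda>n t. P n t - x0) (\<lambda>t. x t - x0) sequentially"
      by (simp only: tel x_def add_diff_cancel_left')
    from uniform_limit_add[OF this uniform_limit_const[where c="\<lambda>t. x0"]]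
    show ?thesis by simp
  qed
  have xc: "continuous_on {0..T} x" if "T \<ge> 0" for T
    by (rule uniform_limit_theorem[OF _ ul[OF that]]) (auto intro!: always_eventually Pc[OF that])
  have fxc: "continuous_on {0..T} (\<lambda>s. f (x s))" if "T \<ge> 0" for T
    by (rule continuous_on_compose2[OF fc xc[OF that]]) auto
  have fPc: "continuous_on {0..T} (\<lambda>s. f (P k s))" if "T \<ge> 0" for T k
    by (rule continuous_on_compose2[OF fc Pc[OF that]]) auto
  have ulf: "uniform_limit {0..T} (\<lambda>n s. f (P n s)) (\<lambda>s. f (x s)) sequentially" if T: "T \<ge> 0" for T
  proof (rule uniform_limitI)
    fix e :: real assume e: "e > 0"
    have "\<forall>\<^sub>F n in sequentially. \<forall>s\<in>{0..T}. dist (P n s) (x s) < e / (L+1)"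
      using uniform_limitD[OF ul[OF T]] e L by simp
    then show "\<forall>\<^sub>F n in sequentially. \<forall>s\<in>{0..T}. dist (f (P n s)) (f (x s)) < e"
    proof (rule eventually_mono, intro ballI)
      fix n s assume h: "\<forall>s\<in>{0..T}. dist (P n s) (x s) < e / (L+1)" and s: "s \<in> {0..T}"
      have "dist (f (P n s)) (f (x s)) \<le> L * dist (P n s) (x s)"
        using lip by (simp add: dist_norm)
      also have "\<dots> \<le> (L+1) * dist (P n s) (x s)" by (simp add: distrib_right)
      also have "\<dots> < e" using h s L by (simp add: field_simps)
      finally show "dist (f (P n s)) (f (x s)) < e" .
    qed
  qed
  have xeq: "x t = x0 + integral {0..t} (\<lambda>s. f (x s))" if t: "t \<ge> 0" for t
  proof -
    obtain I J where I: "\<And>n. ((\<lambda>s. f (P n s)) has_integral I n) {0..t}"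
      and J: "((\<lambda>s. f (x s)) has_integral J) {0..t}" and IJ: "I \<longlonglongrightarrow> J"
      using uniform_limit_integral[OF ulf[OF t] fPc[OF t]] by auto
    have "(\<lambda>n. P (Suc n) t) \<longlonglongrightarrow> x0 + J"
    proof -
      have "P (Suc n) t = x0 + I n" for n
        using integral_unique[OF I[of n]] unfolding P_def by simp
      then show ?thesis using tendsto_add[OF tendsto_const IJ] by simp
    qed
    moreover have "(\<lambda>n. P n t) \<longlonglongrightarrow> x t"
      using tendsto_uniform_limitI[OF ul[OF t]] t by simp
    then have "(\<lambda>n. P (Suc n) t) \<longlonglongrightarrow> x t" by (rule LIMSEQ_Suc)
    ultimately have "x t = x0 + J" using LIMSEQ_unique by blast
    then show ?thesis using integral_unique[OF J] by simp
  qed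
  have "x 0 = x0" using xeq[of 0] by simp
  moreover have "(x has_vector_derivative f (x t)) (at t within {0..})" if t: "t \<ge> 0" for t
  proof -
    have d: "((\<lambda>u. x0 + integral {0..u} (\<lambda>s. f (x s))) has_vector_derivative f (x t)) (at t within {0..t+1})"
      using integral_has_vector_derivative[OF fxc[of "t+1"], of t] t
      by (auto intro!: derivative_eq_intros)
    have eqf: "at t within {0..t+1} = at t within {0..}"
      by (rule at_within_nhd[where S="{t - 1 <..< t + 1}"]) auto
    have "((\<lambda>u. x0 + integral {0..u} (\<lambda>s. f (x s))) has_vector_derivative f (x t)) (at t within {0..})"
      using d eqf by simp
    then show ?thesis
      by (rule has_vector_derivative_transform_within[where d=1]) (use t xeq in auto)
  qed
  ultimately show ?thesis by blast
qed




lemma at_within_nonneg: "(t::real) > 0 \<Longrightarrow> at t within {0..} = at t"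
  by (rule at_within_open_subset[where S="{0<..}"]) auto

lemma lyap_decay:
  fixes V V' :: "real \<Rightarrow> real"
  assumes Vc: "continuous_on {0..} V"
    and Vd: "\<And>t. t \<ge> 0 \<Longrightarrow> (V has_real_derivative V' t) (at t within {0..})"
    and dec: "\<And>t. t \<ge> 0 \<Longrightarrow> V t < c \<Longrightarrow> V' t \<le> - \<gamma> * V t"
    and V0: "V 0 < c" and Vnn: "\<And>t. t \<ge> 0 \<Longrightarrow> V t \<ge> 0" and g: "\<gamma> \<ge> 0"
  shows "\<forall>t\<ge>0. V t \<le> V 0 * exp (- \<gamma> * t)"
proof -
  have key: "V T * exp (\<gamma> * T) \<le> V 0" if T: "T \<ge> 0" and below: "\<And>s. 0 \<le> s \<Longrightarrow> s < T \<Longrightarrow> V s < c" for T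
  proof -
    have "(\<lambda>s. V s * exp (\<gamma> * s)) 0 \<ge> (\<lambda>s. V s * exp (\<gamma> * s)) T"
    proof (rule DERIV_nonpos_imp_decreasing_open[OF T])
      fix s assume s: "0 < s" "s < T"
      have "(V has_real_derivative V' s) (at s)"
        using Vd[of s] s at_within_nonneg[of s] by simp
      then have "((\<lambda>s. V s * exp (\<gamma> * s)) has_real_derivative V' s * exp (\<gamma> * s) + V s * (exp (\<gamma> * s) * \<gamma>)) (at s)"
        by (auto intro!: derivative_eq_intros)
      moreover have "V' s * exp (\<gamma> * s) + V s * (exp (\<gamma> * s) * \<gamma>) \<le> 0"
      proof -
        have "V' s + \<gamma> * V s \<le> 0" using dec[of s] below[of s] s by auto
        then have "(V' s + \<gamma> * V s) * exp (\<gamma> * s) \<le> 0"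
          by (simp add: mult_nonpos_nonneg)
        then show ?thesis by (simp add: algebra_simps)
      qed
      ultimately show "\<exists>y. ((\<lambda>s. V s * exp (\<gamma> * s)) has_real_derivative y) (at s) \<and> y \<le> 0" by blast
    next
      show "continuous_on {0..T} (\<lambda>s. V s * exp (\<gamma> * s))"
        using Vc by (intro continuous_intros) (auto elim: continuous_on_subset)
    qed
    then show ?thesis by simp
  qed
  have below: "V t < c" if t: "t \<ge> 0" for t
  proof (rule ccontr)
    assume "\<not> V t < c"
    define S where "S = {0..t} \<inter> V -` {c..}"
    have cS: "closed S" unfolding S_def
      by (rule continuous_closed_preimage) (use Vc in \<open>auto elim: continuous_on_subset\<close>)
    have neS: "S \<noteq> {}" using t \<open>\<not> V t < c\<close> unfolding S_def by auto
    have bS: "bdd_below S" unfolding S_def by (rule bdd_belowI[of _ 0]) auto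
    define t1 where "t1 = Inf S"
    have t1S: "t1 \<in> S" unfolding t1_def by (rule closed_contains_Inf[OF neS bS cS])
    then have t1: "t1 \<ge> 0" "V t1 \<ge> c" unfolding S_def by auto
    have bl: "V s < c" if "0 \<le> s" "s < t1" for s
    proof (rule ccontr)
      assume "\<not> V s < c"
      then have "s \<in> S" using that t1S unfolding S_def by auto
      then have "t1 \<le> s" unfolding t1_def by (rule cInf_lower[OF _ bS])
      then show False using that by simp
    qed
    have "V t1 * exp (\<gamma> * t1) \<le> V 0" by (rule key[OF t1(1) bl])
    moreover have "V t1 \<le> V t1 * exp (\<gamma> * t1)"
      using t1 g Vnn[of t1] by (intro mult_le_cancel_left1[THEN iffD2] ) auto
    ultimately show False using t1 V0 by linarith
  qed
  show ?thesis
  proof (intro allI impI)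
    fix t :: real assume t: "t \<ge> 0"
    have "V t * exp (\<gamma> * t) \<le> V 0" by (rule key[OF t below]) auto
    then have "V t * exp (\<gamma> * t) * exp (- \<gamma> * t) \<le> V 0 * exp (- \<gamma> * t)"
      by (simp add: mult_right_mono)
    then show "V t \<le> V 0 * exp (- \<gamma> * t)" by (simp add: mult.assoc exp_add[symmetric])
  qed
qed

lemma diag_mv:
  fixes D :: "real^'n^'n"
  assumes "\<forall>i j. i \<noteq> j \<longrightarrow> D$i$j = 0"
  shows "(D *v x)$i = D$i$i * x$i"
proof -
  have "(\<Sum>j\<in>UNIV. D$i$j * x$j) = (\<Sum>j\<in>UNIV. if j = i then D$i$i * x$i else 0)"
    by (rule sum.cong) (use assms in auto)
  then show ?thesis by (simp add: matrix_vector_mult_def)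
qed

lemma norm_sq_sum: "(norm (y::real^'n))^2 = (\<Sum>i\<in>UNIV. (y$i)^2)"
  unfolding power2_norm_eq_inner inner_vec_def by (simp add: power2_eq_square)

lemma inner_sum: "(x::real^'n) \<bullet> y = (\<Sum>i\<in>UNIV. x$i * y$i)"
  by (simp add: inner_vec_def)

lemma relu_lip: "norm (relu a - relu (c::real^'n)) \<le> norm (a - c)"
  by (rule norm_le_componentwise_cart) (auto simp: relu_def)

lemma field_lip:
  fixes J D :: "real^'n^'n"
  shows "\<exists>L\<ge>0. \<forall>x y. norm (tln_field J D b x - tln_field J D b y) \<le> L * norm (x - y)"
proof -
  obtain KD where KD: "KD \<ge> 0" "\<And>z. norm (D *v z) \<le> norm z * KD"
    using bounded_linear.nonneg_bounded[OF matrix_vector_mul_bounded_linear[of D]] by blast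
  obtain KJ where KJ: "KJ \<ge> 0" "\<And>z. norm (J *v z) \<le> norm z * KJ"
    using bounded_linear.nonneg_bounded[OF matrix_vector_mul_bounded_linear[of J]] by blast
  have "norm (tln_field J D b x - tln_field J D b y) \<le> (KD + KJ) * norm (x - y)" for x y
  proof -
    have "tln_field J D b x - tln_field J D b y = - (D *v (x - y)) + (relu (J *v x + b) - relu (J *v y + b))"
      by (simp add: tln_field_def matrix_vector_mult_diff_distrib algebra_simps)
    also have "norm \<dots> \<le> norm (D *v (x - y)) + norm (relu (J *v x + b) - relu (J *v y + b))"
      by (metis norm_minus_cancel norm_triangle_ineq)
    also have "\<dots> \<le> norm (x - y) * KD + norm (J *v (x - y))"
      using KD(2)[of "x - y"] relu_lip[of "J *v x + b" "J *v y + b"]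
      by (simp add: matrix_vector_mult_diff_distrib)
    also have "\<dots> \<le> norm (x - y) * KD + norm (x - y) * KJ" using KJ(2)[of "x-y"] by simp
    finally show ?thesis by (simp add: algebra_simps)
  qed
  then show ?thesis using KD KJ by (intro exI[of _ "KD + KJ"]) auto
qed

lemma tln_exists:
  fixes J D :: "real^'n^'n"
  shows "\<exists>x. tln_solution J D b x0 x"
proof -
  obtain L where L: "L \<ge> 0" "\<And>x y. norm (tln_field J D b x - tln_field J D b y) \<le> L * norm (x - y)"
    using field_lip by blast
  show ?thesis using ode_exists[OF L(2) L(1), of x0] unfolding tln_solution_def by blast
qed

lemma comp_deriv:
  assumes "(x has_vector_derivative v) (at t within S)"
  shows "((\<lambda>t. x t $ i) has_real_derivative v $ i) (at t within S)"
  using bounded_linear.has_vector_derivative[OF bounded_linear_vec_nth assms]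
  by (simp add: has_real_derivative_iff_has_vector_derivative)




lemma exp_decay_lim: "(\<gamma>::real) > 0 \<Longrightarrow> ((\<lambda>t. c * exp (- \<gamma> * t)) \<longlongrightarrow> 0) at_top"
  by real_asymp

lemma sq_deriv:
  assumes "(x has_vector_derivative v) (at t within S)"
  shows "((\<lambda>t. w * (x t $ i - a)^2) has_real_derivative w * (2 * (x t $ i - a) * v $ i)) (at t within S)"
  using comp_deriv[OF assms, of i]
  by (auto intro!: derivative_eq_intros)

lemma amgm_aux:
  fixes a c KM \<mu> :: real
  assumes "\<mu> > 0"
  shows "2 * a * c * KM \<le> \<mu> * a^2 + KM^2 / \<mu> * c^2"
proof -
  have "0 \<le> (\<mu> * a - KM * c)^2" by simp
  then have "2 * \<mu> * a * c * KM \<le> \<mu>^2 * a^2 + KM^2 * c^2" by (simp add: power2_eq_square algebra_simps)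
  then have "(2 * \<mu> * a * c * KM) / \<mu> \<le> (\<mu>^2 * a^2 + KM^2 * c^2) / \<mu>"
    using assms by (intro divide_right_mono) auto
  also have "(\<mu>^2 * a^2 + KM^2 * c^2) / \<mu> = \<mu> * a^2 + KM^2 / \<mu> * c^2"
    using assms by (simp add: field_simps power2_eq_square)
  finally show ?thesis using assms by simp
qed

lemma nd_key:
  fixes M D :: "real^'n^'n" and y :: "real^'n"
  assumes mu: "\<mu> > 0" and dmin: "dmin > 0" "\<forall>i. dmin \<le> D$i$i"
    and KM: "KM \<ge> 0" "\<And>z. norm (M *v z) \<le> norm z * KM"
    and nd: "\<And>y. (\<forall>i. i \<notin> \<sigma> \<longrightarrow> y$i = 0) \<Longrightarrow> y \<bullet> (M *v y) \<le> - \<mu> * (norm y)^2"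
    and K: "K = KM^2 / (\<mu> * dmin) + 1"
  shows "(\<Sum>i\<in>UNIV. (if i \<in> \<sigma> then 1 else K) * (2 * y$i * (if i \<in> \<sigma> then (M *v y)$i else - (D$i$i * y$i))))
     \<le> - min \<mu> dmin * (\<Sum>i\<in>UNIV. (if i \<in> \<sigma> then 1 else K) * (y$i)^2)"
proof -
  define P where "P = (\<chi> i. if i \<in> \<sigma> then y$i else 0)"
  define Q where "Q = (\<chi> i. if i \<in> \<sigma> then 0 else y$i)"
  define Ds where "Ds = (\<Sum>i\<in>UNIV. if i \<in> \<sigma> then 0 else D$i$i * (y$i)^2)"
  have yPQ: "y = P + Q" unfolding P_def Q_def by (simp add: vec_eq_iff)
  have L: "(\<Sum>i\<in>UNIV. (if i \<in> \<sigma> then 1 else K) * (2 * y$i * (if i \<in> \<sigma> then (M *v y)$i else - (D$i$i * y$i))))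
        = 2 * (P \<bullet> (M *v y)) - 2 * K * Ds"
    unfolding inner_sum Ds_def sum_distrib_left sum_subtractf[symmetric]
    by (rule sum.cong) (auto simp: P_def power2_eq_square)
  have W: "(\<Sum>i\<in>UNIV. (if i \<in> \<sigma> then 1 else K) * (y$i)^2) = (norm P)^2 + K * (norm Q)^2"
    unfolding norm_sq_sum sum_distrib_left sum.distrib[symmetric]
    by (rule sum.cong) (auto simp: P_def Q_def)
  have Dsb: "dmin * (norm Q)^2 \<le> Ds"
    unfolding norm_sq_sum Ds_def sum_distrib_left
    by (rule sum_mono) (use dmin in \<open>auto simp: Q_def intro: mult_right_mono\<close>)
  have PM: "P \<bullet> (M *v y) = P \<bullet> (M *v P) + P \<bullet> (M *v Q)"
    by (simp add: yPQ matrix_vector_right_distrib inner_add_right)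
  have P1: "P \<bullet> (M *v P) \<le> - \<mu> * (norm P)^2" by (rule nd) (simp add: P_def)
  have "P \<bullet> (M *v Q) \<le> norm P * norm (M *v Q)" by (rule norm_cauchy_schwarz)
  also have "\<dots> \<le> norm P * (norm Q * KM)" by (rule mult_left_mono[OF KM(2)]) simp
  finally have P2: "P \<bullet> (M *v Q) \<le> norm P * norm Q * KM" by simp
  have am: "2 * norm P * norm Q * KM \<le> \<mu> * (norm P)^2 + KM^2/\<mu> * (norm Q)^2"
    by (rule amgm_aux[OF mu])
  have Kd: "KM^2/\<mu> \<le> K * dmin" using mu dmin K by (simp add: field_simps)
  have Kpos: "K \<ge> 1" using K mu dmin by simp
  have q: "KM^2/\<mu> * (norm Q)^2 \<le> K * dmin * (norm Q)^2" by (rule mult_right_mono[OF Kd]) simp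
  have g1: "min \<mu> dmin * (norm P)^2 \<le> \<mu> * (norm P)^2" by (rule mult_right_mono) auto
  have g2: "min \<mu> dmin * (K * (norm Q)^2) \<le> dmin * (K * (norm Q)^2)" 
    using Kpos by (intro mult_right_mono) auto
  have "K * Ds \<ge> K * (dmin * (norm Q)^2)" using Dsb Kpos by simp
  then show ?thesis unfolding L W PM using P1 P2 am q g1 g2
    by (simp add: algebra_simps)
qed

lemma kfrac: "(K::real) \<ge> 1 \<Longrightarrow> K / (K+1)^2 < 1"
proof -
  assume K: "K \<ge> 1"
  have "0 \<le> K*K" by simp
  moreover have "(K+1)^2 = K*K + 2*K + 1" by (simp add: power2_eq_square algebra_simps)
  ultimately have "K < (K+1)^2" using K by linarith
  moreover have "(K+1)^2 > 0" by (rule zero_less_power) (use K in simp)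
  ultimately show ?thesis by (simp only: divide_less_eq) simp
qed

lemma min_diag:
  fixes D :: "real^'n^'n"
  assumes "\<forall>i. D$i$i > 0"
  obtains dmin where "dmin > 0" "\<forall>i. dmin \<le> D$i$i"
proof -
  define dmin where "dmin = Min (range (\<lambda>i. D$i$i))"
  have "dmin \<in> range (\<lambda>i. D$i$i)" unfolding dmin_def by (rule Min_in) auto
  then have "dmin > 0" using assms by auto
  moreover have "\<forall>i. dmin \<le> D$i$i" unfolding dmin_def by (auto intro: Min_le)
  ultimately show ?thesis using that by blast
qed

lemma nd_stable:
  fixes J D :: "real^'n^'n"
  assumes Dd: "\<forall>i j. i \<noteq> j \<longrightarrow> D$i$j = 0" and Dp: "\<forall>i. D$i$i > 0"
    and ne: "\<sigma> \<noteq> {}" and mu: "\<mu> > 0"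
    and nd: "\<And>y. (\<forall>i. i \<notin> \<sigma> \<longrightarrow> y$i = 0) \<Longrightarrow> y \<bullet> ((J - D) *v y) \<le> - \<mu> * (norm y)^2"
  shows "stable_set J D \<sigma>"
proof -
  define M where "M = J - D"
  obtain dmin where dmin: "dmin > 0" "\<forall>i. dmin \<le> D$i$i" using min_diag[OF Dp] by blast
  define xs :: "real^'n" where "xs = (\<chi> i. if i \<in> \<sigma> then 1 else 0)"
  define b :: "real^'n" where "b = (\<chi> i. if i \<in> \<sigma> then - ((M *v xs)$i) else - ((J *v xs)$i) - 1)"
  have Jx: "(J *v x)$i = (M *v x)$i + D$i$i * x$i" for x i
    unfolding M_def by (simp add: matrix_vector_mult_diff_rdistrib diag_mv[OF Dd])
  have inp_xs: "(J *v xs + b)$i = (if i \<in> \<sigma> then D$i$i else -1)" for i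
    using Jx[of xs i] by (simp add: b_def xs_def)
  have fp: "fixed_point J D b xs"
    unfolding fixed_point_def nonneg_vec_def
  proof (intro conjI allI)
    show "0 \<le> xs$i" for i by (simp add: xs_def)
    show "tln_field J D b xs = 0"
      unfolding tln_field_def relu_def vec_eq_iff
      using inp_xs Dp by (auto simp: diag_mv[OF Dd] xs_def)
  qed
  have suppxs: "supp xs = \<sigma>" by (auto simp: supp_def xs_def)
  obtain KJ where KJ: "KJ \<ge> 0" "\<And>z. norm (J *v z) \<le> norm z * KJ"
    using bounded_linear.nonneg_bounded[OF matrix_vector_mul_bounded_linear[of J]] by blast
  obtain KM where KM: "KM \<ge> 0" "\<And>z. norm (M *v z) \<le> norm z * KM"
    using bounded_linear.nonneg_bounded[OF matrix_vector_mul_bounded_linear[of M]] by blast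
  define r where "r = min dmin 1 / (KJ + 1)"
  have r: "r > 0" using dmin KJ by (simp add: r_def)
  have reg: "tln_field J D b x $ i = (if i \<in> \<sigma> then (M *v (x - xs))$i else - (D$i$i * (x - xs)$i))"
    if xr: "norm (x - xs) < r" for x i
  proof -
    have "\<bar>(J *v (x - xs))$i\<bar> \<le> norm (J *v (x - xs))" by (rule component_le_norm_cart)
    also have "\<dots> \<le> norm (x - xs) * KJ" by (rule KJ(2))
    also have "\<dots> \<le> norm (x - xs) * (KJ + 1)" by (simp add: mult_left_mono)
    also have "\<dots> < min dmin 1" using xr KJ by (simp add: r_def field_simps)
    finally have sm: "\<bar>(J *v (x - xs))$i\<bar> < min dmin 1" .
    have inp: "(J *v x + b)$i = (J *v xs + b)$i + (J *v (x - xs))$i"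
      by (simp add: matrix_vector_mult_diff_distrib)
    show ?thesis
    proof (cases "i \<in> \<sigma>")
      case True
      have "dmin \<le> D$i$i" using dmin by auto
      then have "(J *v x + b)$i > 0" using inp inp_xs[of i] sm True by auto
      then have "tln_field J D b x $ i = - (D$i$i * x$i) + (J *v x)$i + b$i"
        by (simp add: tln_field_def relu_def diag_mv[OF Dd])
      also have "\<dots> = (M *v x)$i - (M *v xs)$i" using Jx[of x i] True by (simp add: b_def)
      finally show ?thesis using True by (simp add: matrix_vector_mult_diff_distrib)
    next
      case False
      then have "(J *v x + b)$i < 0" using inp inp_xs[of i] sm by auto
      then show ?thesis using False by (simp add: tln_field_def relu_def diag_mv[OF Dd] xs_def)
    qed
  qed
  define K where "K = KM^2 / (\<mu> * dmin) + 1"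
  have K1: "K \<ge> 1" using mu dmin by (simp add: K_def)
  define W where "W = (\<lambda>y::real^'n. \<Sum>i\<in>UNIV. (if i \<in> \<sigma> then 1 else K) * (y$i)^2)"
  define \<gamma> where "\<gamma> = min \<mu> dmin"
  have gp: "\<gamma> > 0" using mu dmin by (simp add: \<gamma>_def)
  have Wlo: "(norm y)^2 \<le> W y" for y
    unfolding W_def norm_sq_sum by (rule sum_mono) (use K1 in \<open>auto intro: mult_right_mono[of 1 K, simplified]\<close>)
  have Whi: "W y \<le> K * (norm y)^2" for y
    unfolding W_def norm_sq_sum sum_distrib_left by (rule sum_mono) (use K1 in \<open>auto intro: mult_right_mono[of 1 K, simplified]\<close>)
  have Wnn: "W y \<ge> 0" for y using Wlo[of y] by (meson order_trans zero_le_power2)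
  have decay: "\<forall>t\<ge>0. W (x t - xs) \<le> W (x0 - xs) * exp (- \<gamma> * t)"
    if sol: "tln_solution J D b x0 x" and x0: "norm (x0 - xs) < r / (K+1)" for x0 x
  proof -
    define V where "V = (\<lambda>t. W (x t - xs))"
    define V' where "V' = (\<lambda>t. \<Sum>i\<in>UNIV. (if i \<in> \<sigma> then 1 else K) * (2 * (x t $ i - xs $ i) * tln_field J D b (x t) $ i))"
    have xd: "\<And>t. t \<ge> 0 \<Longrightarrow> (x has_vector_derivative tln_field J D b (x t)) (at t within {0..})"
      and x00: "x 0 = x0" using sol unfolding tln_solution_def by auto
    have Vd: "(V has_real_derivative V' t) (at t within {0..})" if t: "t \<ge> 0" for t
      unfolding V_def V'_def W_def
      by (rule DERIV_sum) (simp only: vector_minus_component, rule sq_deriv[OF xd[OF t]])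
    have Vc: "continuous_on {0..} V"
      unfolding continuous_on_eq_continuous_within
      using Vd by (auto intro: DERIV_continuous)
    have dec: "V' t \<le> - \<gamma> * V t" if t: "t \<ge> 0" and Vt: "V t < r^2" for t
    proof -
      have "(norm (x t - xs))^2 < r^2" using Wlo[of "x t - xs"] Vt unfolding V_def by simp
      then have nr: "norm (x t - xs) < r" using r by (simp add: power_less_imp_less_base)
      have "V' t = (\<Sum>i\<in>UNIV. (if i \<in> \<sigma> then 1 else K) * (2 * (x t - xs)$i * (if i \<in> \<sigma> then (M *v (x t - xs))$i else - (D$i$i * (x t - xs)$i))))"
        unfolding V'_def by (rule sum.cong) (auto simp: reg[OF nr])
      also have "\<dots> \<le> - \<gamma> * V t"
        unfolding V_def W_def \<gamma>_def
        by (rule nd_key[OF mu dmin KM _ K_def]) (use nd in \<open>simp add: M_def\<close>)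
      finally show ?thesis .
    qed
    have V0: "V 0 < r^2"
    proof -
      have "V 0 \<le> K * (norm (x0 - xs))^2" using Whi x00 unfolding V_def by simp
      also have "\<dots> \<le> K * (r / (K+1))^2"
        using x0 K1 by (intro mult_left_mono power_mono) auto
      also have "\<dots> = r^2 * (K / (K+1)^2)" by (simp add: power_divide)
      also have "\<dots> < r^2 * 1"
        using r K1 kfrac by (intro mult_strict_left_mono) auto
      finally show ?thesis by simp
    qed
    have "\<forall>t\<ge>0. V t \<le> V 0 * exp (- \<gamma> * t)"
      by (rule lyap_decay[OF Vc Vd dec V0]) (use Wnn gp in \<open>auto simp: V_def\<close>)
    then show ?thesis unfolding V_def using x00 by simp
  qed
  have bound: "norm (x t - xs) < e"
    if sol: "tln_solution J D b x0 x" and x0: "norm (x0 - xs) < min (r / (K+1)) (e / (K+1))" 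
      and t: "t \<ge> 0" and e: "e > 0" for x0 x t e
  proof -
    have "(norm (x t - xs))^2 \<le> W (x t - xs)" by (rule Wlo)
    also have "\<dots> \<le> W (x0 - xs) * exp (- \<gamma> * t)" using decay[OF sol] x0 t by auto
    also have "\<dots> \<le> W (x0 - xs)" using gp t Wnn[of "x0 - xs"] by (simp add: mult_left_le)
    also have "\<dots> \<le> K * (norm (x0 - xs))^2" by (rule Whi)
    also have "\<dots> \<le> K * (e / (K+1))^2"
      using x0 K1 by (intro mult_left_mono power_mono) auto
    also have "\<dots> = e^2 * (K / (K+1)^2)" by (simp add: power_divide)
    also have "\<dots> < e^2 * 1"
      using e K1 kfrac by (intro mult_strict_left_mono) auto
    finally show ?thesis using e by (simp add: power_less_imp_less_base)
  qed
  have ly: "lyapunov_stable J D b xs"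
    unfolding lyapunov_stable_def
  proof (intro conjI fp allI impI)
    fix e :: real assume e: "e > 0"
    show "\<exists>d>0. \<forall>x0 x. nonneg_vec x0 \<and> dist x0 xs < d \<and> tln_solution J D b x0 x \<longrightarrow> (\<forall>t\<ge>0. dist (x t) xs < e)"
      using bound e r K1 by (intro exI[of _ "min (r / (K+1)) (e / (K+1))"]) (auto simp: dist_norm)
  qed
  have conv: "(x \<longlongrightarrow> xs) at_top"
    if sol: "tln_solution J D b x0 x" and x0: "norm (x0 - xs) < r / (K+1)" for x0 x
  proof (rule tendstoI)
    fix e :: real assume e: "e > 0"
    have "\<forall>\<^sub>F t in at_top. W (x0 - xs) * exp (- \<gamma> * t) < e^2"
      using order_tendstoD(2)[OF exp_decay_lim[OF gp, of "W (x0 - xs)"], of "e^2"] e by simp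
    moreover have "\<forall>\<^sub>F t in at_top. (t::real) \<ge> 0" by (rule eventually_ge_at_top)
    ultimately show "\<forall>\<^sub>F t in at_top. dist (x t) xs < e"
    proof eventually_elim
      case (elim t)
      have "(norm (x t - xs))^2 \<le> W (x t - xs)" by (rule Wlo)
      also have "\<dots> \<le> W (x0 - xs) * exp (- \<gamma> * t)" using decay[OF sol x0] elim by auto
      finally have "(norm (x t - xs))^2 < e^2" using elim by simp
      then show ?case using e by (simp add: dist_norm power_less_imp_less_base)
    qed
  qed
  have "asymptotically_stable J D b xs"
    unfolding asymptotically_stable_def
    using ly conv r K1 by (intro conjI exI[of _ "r / (K+1)"]) (auto simp: dist_norm)
  then show ?thesis unfolding stable_set_def using ne suppxs by blast
qed

lemma fp_facts:
  fixes J D :: "real^'n^'n"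
  assumes Dd: "\<forall>i j. i \<noteq> j \<longrightarrow> D$i$j = 0" and Dp: "\<forall>i. D$i$i > 0"
    and fp: "fixed_point J D b xs"
  shows "\<And>i. i \<in> supp xs \<Longrightarrow> (J *v xs + b)$i = D$i$i * xs$i"
    and "\<And>i. i \<notin> supp xs \<Longrightarrow> xs$i = 0"
    and "\<And>i. i \<notin> supp xs \<Longrightarrow> (J *v xs + b)$i \<le> 0"
proof -
  have nn: "\<And>i. xs$i \<ge> 0" and f0: "\<And>i. tln_field J D b xs $ i = 0"
    using fp unfolding fixed_point_def nonneg_vec_def by auto
  have fi: "max ((J *v xs + b)$i) 0 = D$i$i * xs$i" for i
    using f0[of i] by (simp add: tln_field_def relu_def diag_mv[OF Dd])
  fix i
  { assume "i \<in> supp xs"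
    then have "xs$i > 0" by (simp add: supp_def)
    then have "D$i$i * xs$i > 0" using Dp by simp
    then show "(J *v xs + b)$i = D$i$i * xs$i" using fi[of i] by (simp add: max_def split: if_splits) }
  { assume "i \<notin> supp xs"
    then show "xs$i = 0" using nn[of i] by (simp add: supp_def) }
  { assume "i \<notin> supp xs"
    then have "xs$i = 0" using nn[of i] by (simp add: supp_def)
    then show "(J *v xs + b)$i \<le> 0" using fi[of i] by simp }
qed

lemma pos_lower:
  fixes xs :: "real^'n"
  obtains m where "m > 0" "\<And>i. i \<in> supp xs \<Longrightarrow> m \<le> xs$i"
proof (cases "supp xs = {}")
  case True then show ?thesis using that[of 1] by auto
next
  case False
  define m where "m = Min ((\<lambda>i. xs$i) ` supp xs)"
  have "m \<in> (\<lambda>i. xs$i) ` supp xs" unfolding m_def by (rule Min_in) (use False in auto)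
  then have "m > 0" by (auto simp: supp_def)
  moreover have "\<And>i. i \<in> supp xs \<Longrightarrow> m \<le> xs$i" unfolding m_def by (rule Min_le) auto
  ultimately show ?thesis using that by blast
qed

lemma kernel_not_stable:
  fixes J D :: "real^'n^'n"
  assumes Dd: "\<forall>i j. i \<noteq> j \<longrightarrow> D$i$j = 0" and Dp: "\<forall>i. D$i$i > 0"
    and k: "k \<noteq> 0" "\<forall>i. i \<notin> \<tau> \<longrightarrow> k$i = 0" "(J - D) *v k = 0"
  shows "\<not> stable_set J D \<tau>"
proof
  assume "stable_set J D \<tau>"
  then obtain b xs where as: "asymptotically_stable J D b xs" and sx: "supp xs = \<tau>"
    unfolding stable_set_def by blast
  then have fp: "fixed_point J D b xs"
    unfolding asymptotically_stable_def lyapunov_stable_def by blast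
  obtain d where d: "d > 0" and conv: "\<And>x0 x. nonneg_vec x0 \<Longrightarrow> dist x0 xs < d \<Longrightarrow> tln_solution J D b x0 x \<Longrightarrow> (x \<longlongrightarrow> xs) at_top"
    using as unfolding asymptotically_stable_def by blast
  obtain m where m: "m > 0" "\<And>i. i \<in> supp xs \<Longrightarrow> m \<le> xs$i" using pos_lower[of xs] by blast
  define s where "s = min d m / (norm k + 1)"
  have s: "s > 0" using d m unfolding s_def by (intro divide_pos_pos) (auto simp: add_nonneg_pos)
  have snk: "s * norm k < min d m"
  proof -
    have "s * norm k < s * (norm k + 1)" using s by simp
    also have "\<dots> = min d m"
    proof -
      have "norm k + 1 \<noteq> 0" using norm_ge_zero[of k] by linarith
      then show ?thesis unfolding s_def by simp
    qed
    finally show ?thesis .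
  qed
  define x1 where "x1 = xs + s *\<^sub>R k"
  have Jk: "J *v k = D *v k" using k(3) by (simp add: matrix_vector_mult_diff_rdistrib)
  have x1nn: "x1$i \<ge> 0" for i
  proof (cases "i \<in> supp xs")
    case True
    have "\<bar>s * k$i\<bar> \<le> s * norm k" using s component_le_norm_cart[of k i] by (simp add: abs_mult)
    then show ?thesis using True m(2)[of i] snk by (simp add: x1_def) (use abs_le_D2[of "s * k$i"] in linarith)
  next
    case False then show ?thesis using fp_facts(2)[OF Dd Dp fp False] k(2) sx by (simp add: x1_def)
  qed
  have inp1: "(J *v x1 + b)$i = (J *v xs + b)$i + s * (D$i$i * k$i)" for i
    by (simp add: x1_def matrix_vector_right_distrib Jk diag_mv[OF Dd] matrix_vector_mult_scaleR)
  have fx1: "tln_field J D b x1 = 0"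
  proof (subst vec_eq_iff, intro allI)
    fix i
    show "tln_field J D b x1 $ i = 0 $ i"
    proof (cases "i \<in> supp xs")
      case True
      have e: "x1$i = xs$i + s * k$i" by (simp add: x1_def)
      have "(J *v x1 + b)$i = D$i$i * x1$i"
        unfolding inp1[of i] fp_facts(1)[OF Dd Dp fp True] e by (simp add: algebra_simps)
      moreover have "D$i$i * x1$i \<ge> 0" using x1nn[of i] Dp by (simp add: less_imp_le)
      ultimately show ?thesis by (simp add: tln_field_def relu_def diag_mv[OF Dd])
    next
      case False
      have "k$i = 0" using False k(2) sx by auto
      then show ?thesis using inp1[of i] fp_facts(2,3)[OF Dd Dp fp False]
        by (simp add: tln_field_def relu_def diag_mv[OF Dd] x1_def)
    qed
  qed
  have sol: "tln_solution J D b x1 (\<lambda>t. x1)"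
    unfolding tln_solution_def using fx1 by (auto intro: has_vector_derivative_const)
  have "dist x1 xs < d" using snk s by (simp add: x1_def dist_norm)
  then have "((\<lambda>t::real. x1) \<longlongrightarrow> xs) at_top" using conv[OF _ _ sol] x1nn by (auto simp: nonneg_vec_def)
  then have "x1 = xs" using tendsto_const_iff[of "at_top :: real filter" x1 xs] by simp
  then show False using s k(1) by (simp add: x1_def)
qed

lemma eig_not_lyap:
  fixes J D :: "real^'n^'n"
  assumes Dd: "\<forall>i j. i \<noteq> j \<longrightarrow> D$i$j = 0" and Dp: "\<forall>i. D$i$i > 0"
    and u: "u \<noteq> 0" "\<forall>i. i \<notin> \<sigma> \<longrightarrow> u$i = 0" "\<And>y. u \<bullet> ((J - D) *v y) = lam * (u \<bullet> y)"
    and lam: "lam > 0" and sx: "supp xs = \<sigma>"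
  shows "\<not> lyapunov_stable J D b xs"
proof
  assume ly: "lyapunov_stable J D b xs"
  then have fp: "fixed_point J D b xs" unfolding lyapunov_stable_def by blast
  define M where "M = J - D"
  obtain dmin where dmin: "dmin > 0" "\<forall>i. dmin \<le> D$i$i" using min_diag[OF Dp] by blast
  obtain m where m: "m > 0" "\<And>i. i \<in> supp xs \<Longrightarrow> m \<le> xs$i" using pos_lower[of xs] by blast
  obtain KJ where KJ: "KJ \<ge> 0" "\<And>z. norm (J *v z) \<le> norm z * KJ"
    using bounded_linear.nonneg_bounded[OF matrix_vector_mul_bounded_linear[of J]] by blast
  define r where "r = dmin * m / (KJ + 1)"
  have r: "r > 0" using dmin m KJ by (simp add: r_def)
  have Jx: "(J *v x)$i = (M *v x)$i + D$i$i * x$i" for x i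
    unfolding M_def by (simp add: matrix_vector_mult_diff_rdistrib diag_mv[OF Dd])
  have reg: "u \<bullet> tln_field J D b x = lam * (u \<bullet> (x - xs))" if xr: "norm (x - xs) < r" for x
  proof -
    have fi: "tln_field J D b x $ i = (M *v (x - xs))$i" if i: "i \<in> \<sigma>" for i
    proof -
      have "\<bar>(J *v (x - xs))$i\<bar> \<le> norm (J *v (x - xs))" by (rule component_le_norm_cart)
      also have "\<dots> \<le> norm (x - xs) * KJ" by (rule KJ(2))
      also have "\<dots> \<le> norm (x - xs) * (KJ + 1)" by (simp add: mult_left_mono)
      also have "\<dots> < dmin * m" using xr KJ by (simp add: r_def field_simps)
      finally have sm: "\<bar>(J *v (x - xs))$i\<bar> < dmin * m" .
      have ixs: "i \<in> supp xs" using i sx by simp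
      have inpxs: "(J *v xs + b)$i = D$i$i * xs$i" by (rule fp_facts(1)[OF Dd Dp fp ixs])
      have "dmin * m \<le> D$i$i * xs$i" using dmin m(2)[OF ixs] m(1) Dp[rule_format, of i]
        by (intro mult_mono) (auto simp: less_imp_le)
      moreover have inp: "(J *v x + b)$i = (J *v xs + b)$i + (J *v (x - xs))$i"
        by (simp add: matrix_vector_mult_diff_distrib)
      ultimately have "(J *v x + b)$i > 0" using inpxs sm by auto
      then have "tln_field J D b x $ i = - (D$i$i * x$i) + (J *v x)$i + b$i"
        by (simp add: tln_field_def relu_def diag_mv[OF Dd])
      also have "\<dots> = (M *v x)$i - (M *v xs)$i" using Jx[of x i] Jx[of xs i] inpxs by simp
      finally show ?thesis by (simp add: matrix_vector_mult_diff_distrib)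
    qed
    have "u \<bullet> tln_field J D b x = u \<bullet> (M *v (x - xs))"
      unfolding inner_sum by (rule sum.cong) (use u(2) fi in auto)
    then show ?thesis using u(3) unfolding M_def by simp
  qed
  obtain d where d: "d > 0" and st: "\<And>x0 x t. nonneg_vec x0 \<Longrightarrow> dist x0 xs < d \<Longrightarrow> tln_solution J D b x0 x \<Longrightarrow> t \<ge> 0 \<Longrightarrow> dist (x t) xs < r"
    using ly r unfolding lyapunov_stable_def by meson
  define s where "s = min d m / (norm u + 1)"
  have nu: "norm u + 1 > 0" using norm_ge_zero[of u] by linarith
  have s: "s > 0" using d m nu by (simp add: s_def)
  have snk: "s * norm u < min d m"
  proof -
    have "s * norm u < s * (norm u + 1)" using s by simp
    also have "\<dots> = min d m" unfolding s_def using nu by simp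
    finally show ?thesis .
  qed
  define x0 where "x0 = xs + s *\<^sub>R u"
  have x0nn: "nonneg_vec x0" unfolding nonneg_vec_def
  proof
    fix i show "x0$i \<ge> 0"
    proof (cases "i \<in> supp xs")
      case True
      have "\<bar>s * u$i\<bar> \<le> s * norm u" using s component_le_norm_cart[of u i] by (simp add: abs_mult)
      then show ?thesis using True m(2)[of i] snk by (simp add: x0_def) (use abs_le_D2[of "s * u$i"] in linarith)
    next
      case False then show ?thesis using fp_facts(2)[OF Dd Dp fp False] u(2) sx by (simp add: x0_def)
    qed
  qed
  have dx0: "dist x0 xs < d" using snk s by (simp add: x0_def dist_norm)
  obtain x where sol: "tln_solution J D b x0 x" using tln_exists by blast
  have inr: "norm (x t - xs) < r" if "t \<ge> 0" for t using st[OF x0nn dx0 sol that] by (simp add: dist_norm)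
  have xd: "\<And>t. t \<ge> 0 \<Longrightarrow> (x has_vector_derivative tln_field J D b (x t)) (at t within {0..})"
    and x00: "x 0 = x0" using sol unfolding tln_solution_def by auto
  define \<phi> where "\<phi> = (\<lambda>t. u \<bullet> (x t - xs))"
  have \<phi>d: "(\<phi> has_real_derivative lam * \<phi> t) (at t within {0..})" if t: "t \<ge> 0" for t
  proof -
    have "((\<lambda>t. x t - xs) has_vector_derivative tln_field J D b (x t)) (at t within {0..})"
      using xd[OF t] by (auto intro!: derivative_eq_intros)
    from bounded_linear.has_vector_derivative[OF bounded_linear_inner_right[of u] this]
    show ?thesis unfolding \<phi>_def using reg[OF inr[OF t]]
      by (simp add: has_real_derivative_iff_has_vector_derivative)
  qed
  define \<psi> where "\<psi> = (\<lambda>t. \<phi> t * exp (- lam * t))"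
  have \<phi>0: "\<phi> 0 = s * (norm u)^2" unfolding \<phi>_def x00 x0_def by (simp add: power2_norm_eq_inner)
  have \<phi>0p: "\<phi> 0 > 0" using \<phi>0 s u(1) by simp
  define T where "T = (norm u * r / \<phi> 0) / lam"
  have T: "T \<ge> 0" using \<phi>0p lam r unfolding T_def by simp
  have "\<psi> 0 \<le> \<psi> T"
  proof (rule DERIV_nonneg_imp_increasing_open[OF T])
    fix t assume t: "0 < t" "t < T"
    have "(\<phi> has_real_derivative lam * \<phi> t) (at t)"
      using \<phi>d[of t] t at_within_nonneg[of t] by simp
    then have "(\<psi> has_real_derivative lam * \<phi> t * exp (- lam * t) + \<phi> t * (exp (- lam * t) * (- lam))) (at t)"
      unfolding \<psi>_def by (auto intro!: derivative_eq_intros)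
    then show "\<exists>y. (\<psi> has_real_derivative y) (at t) \<and> 0 \<le> y" by (intro exI[of _ 0]) (simp add: algebra_simps)
  next
    have "continuous_on {0..} \<phi>"
      unfolding continuous_on_eq_continuous_within using \<phi>d by (auto intro: DERIV_continuous)
    then show "continuous_on {0..T} \<psi>" unfolding \<psi>_def
      by (intro continuous_intros) (auto elim: continuous_on_subset)
  qed
  then have "\<phi> 0 \<le> \<phi> T * exp (- lam * T)" by (simp add: \<psi>_def)
  then have "\<phi> 0 * exp (lam * T) \<le> \<phi> T * exp (- lam * T) * exp (lam * T)" by (simp add: mult_right_mono)
  then have A: "\<phi> 0 * exp (lam * T) \<le> \<phi> T" by (simp add: mult.assoc exp_add[symmetric])
  have "\<phi> 0 * (1 + lam * T) \<le> \<phi> 0 * exp (lam * T)"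
    using \<phi>0p lam T by (intro mult_left_mono exp_ge_add_one_self_aux) auto
  moreover have "\<phi> 0 * (1 + lam * T) = \<phi> 0 + norm u * r" using \<phi>0p lam unfolding T_def by (simp add: field_simps)
  ultimately have B: "\<phi> 0 + norm u * r \<le> \<phi> T" using A by linarith
  have "\<phi> T \<le> norm u * norm (x T - xs)" unfolding \<phi>_def by (rule norm_cauchy_schwarz)
  also have "\<dots> \<le> norm u * r" using inr[OF T] by (intro mult_left_mono) auto
  finally show False using B \<phi>0p by linarith
qed




lemma rank1_sym:
  fixes M :: "real^'n^'n"
  assumes sym: "transpose M = M" and rk: "rank M = 1" and neg: "\<forall>i. M$i$i < 0"
  shows "\<exists>v. (\<forall>i. v$i \<noteq> 0) \<and> (\<forall>i j. M$i$j = -(v$i * v$j))"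
proof -
  have "dim (range (\<lambda>x. M *v x)) = 1" using rk by (simp add: rank_dim_range)
  then obtain B where B: "B \<subseteq> range (\<lambda>x. M *v x)" "independent B" "range (\<lambda>x. M *v x) \<subseteq> span B" "card B = 1"
    by (metis basis_exists)
  then obtain c where Bc: "B = {c}" using card_1_singletonE[OF B(4)] by blast
  have "\<forall>j. \<exists>a. M *v axis j 1 = a *\<^sub>R c"
  proof
    fix j
    have "M *v axis j 1 \<in> span {c}" using B(3) Bc by auto
    then show "\<exists>a. M *v axis j 1 = a *\<^sub>R c" by (auto simp: span_singleton)
  qed
  then obtain a where a: "\<And>j. M *v axis j 1 = a j *\<^sub>R c" by metis
  have Mac: "M$i$j = a j * c$i" for i j
    using arg_cong[OF a[of j], of "\<lambda>z. z$i"] by (simp add: matrix_vector_mult_basis column_def)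
  have symm: "M$i$j = M$j$i" for i j using arg_cong[OF sym, of "\<lambda>A. A$i$j"] by (simp add: transpose_def)
  define i0 :: 'n where "i0 = undefined"
  define \<kappa> where "\<kappa> = a i0 / c$i0"
  have ci: "c$i \<noteq> 0" and ai: "a i \<noteq> 0" for i using neg[rule_format, of i] Mac[of i i] by auto
  have ak: "a j = \<kappa> * c$j" for j
  proof -
    have "a j * c$i0 = a i0 * c$j" using symm[of i0 j] Mac[of i0 j] Mac[of j i0] by (simp add: mult.commute)
    then show ?thesis unfolding \<kappa>_def using ci[of i0] by (simp add: field_simps)
  qed
  have kneg: "\<kappa> < 0"
  proof -
    have "\<kappa> * (c$i0)^2 < 0" using neg[rule_format, of i0] Mac[of i0 i0] ak[of i0] by (simp add: power2_eq_square mult.assoc)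
    moreover have "(c$i0)^2 > 0" using ci[of i0] by simp
    ultimately show ?thesis by (simp add: mult_less_0_iff)
  qed
  define v where "v = sqrt (- \<kappa>) *\<^sub>R c"
  have "\<forall>i. v$i \<noteq> 0" using ci kneg by (simp add: v_def)
  moreover have "M$i$j = -(v$i * v$j)" for i j
  proof -
    have "sqrt (-\<kappa>) * sqrt (-\<kappa>) = -\<kappa>" using kneg by simp
    then show ?thesis using Mac[of i j] ak[of j] unfolding v_def
      by (simp add: algebra_simps)
  qed
  ultimately show ?thesis by blast
qed

lemma rank1_mv:
  fixes M :: "real^'n^'n"
  assumes "\<forall>i j. M$i$j = -(v$i * v$j)"
  shows "M *v y = - (v \<bullet> y) *\<^sub>R v"
  unfolding vec_eq_iff
  by (simp add: matrix_vector_mult_def assms inner_sum sum_distrib_left sum_distrib_right sum_negf)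
     (auto intro: sum.cong simp: algebra_simps)

lemma quad_aux:
  fixes V1 Vn P Q Y e \<mu> :: real
  assumes V1: "V1 > 0" and e: "e > 0" and mu: "\<mu> = min (V1/2) (e / (2*Vn/V1 + 1))"
    and h: "V1 * Y \<le> 2*P + 2*Vn*Q" and nn: "P \<ge> 0" "Q \<ge> 0" "Vn \<ge> 0"
  shows "-P - e*Q \<le> -\<mu>*(Y+Q)" and "\<mu> > 0"
proof -
  have d: "2*Vn/V1 + 1 > 0" using V1 nn by (simp add: add_nonneg_pos)
  show mp: "\<mu> > 0" using V1 e d mu by simp
  have Y: "Y \<le> (2*P + 2*Vn*Q) / V1" using h V1 by (simp add: field_simps)
  have "\<mu> * Y \<le> \<mu> * ((2*P + 2*Vn*Q) / V1)" using mp Y by (intro mult_left_mono) auto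
  also have "\<dots> = (2*\<mu>/V1) * P + (\<mu> * (2*Vn/V1 + 1) - \<mu>) * Q" using V1 by (simp add: field_simps)
  also have "\<dots> \<le> 1 * P + (e - \<mu>) * Q"
  proof (rule add_mono)
    have "2*\<mu>/V1 \<le> 1" using mu V1 by (simp add: field_simps)
    then show "(2*\<mu>/V1) * P \<le> 1 * P" using nn by (intro mult_right_mono) auto
    have "\<mu> \<le> e / (2*Vn/V1 + 1)" using mu by simp
    then have "\<mu> * (2*Vn/V1 + 1) \<le> e" using pos_le_divide_eq[OF d] by blast
    then show "(\<mu> * (2*Vn/V1 + 1) - \<mu>) * Q \<le> (e - \<mu>) * Q" using nn by (intro mult_right_mono) auto
  qed
  finally show "-P - e*Q \<le> -\<mu>*(Y+Q)" by (simp add: algebra_simps)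
qed

lemma as_max_stable:
  fixes J D :: "real^'n^'n"
  assumes Dd: "\<forall>i j. i \<noteq> j \<longrightarrow> D$i$j = 0" and Dp: "\<forall>i. D$i$i > 0"
    and v: "\<forall>i. v$i \<noteq> 0" and Mv: "\<forall>i j. (J - D)$i$j = -(v$i * v$j)"
    and i1: "i1 \<in> \<sigma>" and e: "e > 0"
  shows "\<exists>As. perturbation e As \<and> maximally_stable (J + As) D \<sigma>"
proof -
  define As :: "real^'n^'n" where "As = (\<chi> i j. if i = j \<and> i \<in> \<sigma> \<and> i \<noteq> i1 then -e else 0)"
  have pert: "perturbation e As" unfolding perturbation_def As_def using e by auto
  have Asv: "(As *v y)$i = (if i \<in> \<sigma> \<and> i \<noteq> i1 then -e * y$i else 0)" for y i
  proof -
    have "(\<Sum>j\<in>UNIV. As$i$j * y$j) = (\<Sum>j\<in>UNIV. if j = i then As$i$i * y$i else 0)"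
      by (rule sum.cong) (auto simp: As_def)
    then show ?thesis by (simp add: matrix_vector_mult_def As_def)
  qed
  have Mn: "(J + As - D) *v y = - (v \<bullet> y) *\<^sub>R v + As *v y" for y
  proof -
    have "J + As - D = (J - D) + As" by (simp add: algebra_simps)
    then have "(J + As - D) *v y = (J - D) *v y + As *v y" by (simp only: matrix_vector_mult_add_rdistrib)
    then show ?thesis by (simp only: rank1_mv[OF Mv])
  qed
  define v1 where "v1 = v$i1"
  define \<mu> where "\<mu> = min (v1^2/2) (e / (2*(norm v)^2/v1^2 + 1))"
  have nd: "y \<bullet> ((J + As - D) *v y) \<le> - \<mu> * (norm y)^2" if ys: "\<forall>i. i \<notin> \<sigma> \<longrightarrow> y$i = 0" for y
  proof -
    define y' where "y' = (\<chi> i. if i = i1 then 0 else y$i)"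
    have yy: "y = y' + y$i1 *\<^sub>R axis i1 1" unfolding y'_def by (auto simp: vec_eq_iff axis_def)
    have vy: "v \<bullet> y = v \<bullet> y' + v1 * y$i1" unfolding v1_def
      by (subst yy) (simp add: inner_add_right inner_axis)
    have ny: "(norm y)^2 = (norm y')^2 + (y$i1)^2"
    proof -
      have "(\<Sum>i\<in>UNIV. (y$i)^2) = (\<Sum>i\<in>UNIV. (y'$i)^2 + (if i = i1 then (y$i1)^2 else 0))"
        by (rule sum.cong) (auto simp: y'_def)
      then show ?thesis by (simp add: norm_sq_sum sum.distrib)
    qed
    have yA: "y \<bullet> (As *v y) = - e * (norm y')^2"
    proof -
      have "y \<bullet> (As *v y) = (\<Sum>i\<in>UNIV. -e * (y'$i)^2)"
        unfolding inner_sum by (rule sum.cong) (use ys in \<open>auto simp: Asv y'_def power2_eq_square\<close>)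
      then show ?thesis by (simp add: norm_sq_sum sum_distrib_left[symmetric] sum_negf)
    qed
    have q: "y \<bullet> ((J + As - D) *v y) = - ((v \<bullet> y)^2) - e * ((norm y')^2)"
      unfolding Mn inner_add_right yA by (simp add: power2_eq_square inner_commute)
    have cs: "(v \<bullet> y')^2 \<le> (norm v)^2 * (norm y')^2"
    proof -
      have "\<bar>v \<bullet> y'\<bar> \<le> norm v * norm y'" by (rule Cauchy_Schwarz_ineq2)
      then have "\<bar>v \<bullet> y'\<bar>^2 \<le> (norm v * norm y')^2" by (rule power_mono) simp
      then show ?thesis by (simp add: power_mult_distrib)
    qed
    have "v1^2 * (y$i1)^2 = (v \<bullet> y - v \<bullet> y')^2" using vy by (simp add: power_mult_distrib)
    also have "\<dots> \<le> 2 * (v \<bullet> y)^2 + 2 * (v \<bullet> y')^2"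
    proof -
      have "0 \<le> (v \<bullet> y + v \<bullet> y')^2" by simp
      then show ?thesis by (simp add: power2_eq_square algebra_simps)
    qed
    finally have h: "v1^2 * (y$i1)^2 \<le> 2 * (v \<bullet> y)^2 + 2 * (norm v)^2 * (norm y')^2" using cs by linarith
    have V1: "v1^2 > 0" using v by (simp add: v1_def)
    have "-((v \<bullet> y)^2) - e * ((norm y')^2) \<le> -\<mu> * ((y$i1)^2 + (norm y')^2)"
      by (rule quad_aux(1)[OF V1 e \<mu>_def h]) auto
    then show ?thesis using q ny by (simp add: algebra_simps)
  qed
  have mu: "\<mu> > 0"
    using quad_aux(2)[OF _ e \<mu>_def, of 0 0 0] v by (simp add: v1_def)
  have st: "stable_set (J + As) D \<sigma>"
    by (rule nd_stable[OF Dd Dp _ mu nd]) (use i1 in auto)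
  have nst: "\<not> stable_set (J + As) D \<tau>" if sub: "\<sigma> \<subset> \<tau>" for \<tau>
  proof -
    obtain j where j: "j \<in> \<tau>" "j \<notin> \<sigma>" using psubset_imp_ex_mem[OF sub] by blast
    have ji: "j \<noteq> i1" using j i1 by auto
    define k :: "real^'n" where "k = (\<chi> i. if i = i1 then v$j else if i = j then - v$i1 else 0)"
    have kv: "v \<bullet> k = 0"
    proof -
      have "v \<bullet> k = (\<Sum>i\<in>UNIV. (if i = i1 then v$i1 * v$j else 0) + (if i = j then - (v$j * v$i1) else 0))"
        unfolding inner_sum by (rule sum.cong) (use ji in \<open>auto simp: k_def\<close>)
      then show ?thesis by (simp add: sum.distrib)
    qed
    have "k$j \<noteq> 0" using ji v by (simp add: k_def)
    then have k0: "k \<noteq> 0" by auto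
    have ks: "\<forall>i. i \<notin> \<tau> \<longrightarrow> k$i = 0" using j i1 sub by (auto simp: k_def)
    have "(J + As - D) *v k = 0"
      unfolding Mn kv vec_eq_iff using ji j by (auto simp: Asv k_def)
    then show ?thesis by (rule kernel_not_stable[OF Dd Dp k0 ks])
  qed
  show ?thesis using pert st nst unfolding maximally_stable_def by blast
qed

lemma au_min_unstable:
  fixes J D :: "real^'n^'n"
  assumes Dd: "\<forall>i j. i \<noteq> j \<longrightarrow> D$i$j = 0" and Dp: "\<forall>i. D$i$i > 0"
    and v: "\<forall>i. v$i \<noteq> 0" and Mv: "\<forall>i j. (J - D)$i$j = -(v$i * v$j)"
    and i1: "i1 \<in> \<sigma>" and c2: "card \<sigma> \<ge> 2" and e: "e > 0"
  shows "\<exists>Au. perturbation e Au \<and> minimally_unstable (J + Au) D \<sigma>"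
proof -
  define c where "c = real (card \<sigma>)"
  define u :: "real^'n" where "u = (\<chi> i. if i \<in> \<sigma> then (if i = i1 then -(c - 1)/v$i1 else 1/v$i) else 0)"
  have us: "\<forall>i. i \<notin> \<sigma> \<longrightarrow> u$i = 0" by (simp add: u_def)
  have c1: "c - 1 \<noteq> 0" using c2 by (simp add: c_def)
  have unz: "u$i \<noteq> 0" if "i \<in> \<sigma>" for i using that v c1 by (simp add: u_def)
  have fin: "finite \<sigma>" by simp
  have uv: "u \<bullet> v = 0"
  proof -
    have "u \<bullet> v = (\<Sum>i\<in>UNIV. if i \<in> \<sigma> then (if i = i1 then -(c - 1) else 1) else 0)"
      unfolding inner_sum by (rule sum.cong) (use v in \<open>auto simp: u_def\<close>)
    also have "\<dots> = (\<Sum>i\<in>\<sigma>. if i = i1 then -(c - 1) else 1)"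
      by (simp add: sum.If_cases)
    also have "\<dots> = -(c - 1) + (\<Sum>i\<in>\<sigma> - {i1}. if i = i1 then -(c - 1) else 1)"
      using i1 by (simp add: sum.remove)
    also have "\<dots> = -(c - 1) + real (card (\<sigma> - {i1}))" by simp
    also have "\<dots> = 0" using i1 c2 by (simp add: c_def card_Diff_singleton of_nat_diff)
    finally show ?thesis .
  qed
  obtain um where um: "um > 0" "\<And>i. i \<in> \<sigma> \<Longrightarrow> um \<le> (u$i)^2"
  proof -
    define um where "um = Min ((\<lambda>i. (u$i)^2) ` \<sigma>)"
    have "um \<in> (\<lambda>i. (u$i)^2) ` \<sigma>" unfolding um_def by (rule Min_in) (use i1 in auto)
    then have "um > 0" using unz by auto
    moreover have "\<And>i. i \<in> \<sigma> \<Longrightarrow> um \<le> (u$i)^2" unfolding um_def by (rule Min_le) auto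
    ultimately show ?thesis using that by blast
  qed
  define N where "N = (norm u)^2"
  have cmp: "(u$i)^2 \<le> N" for i
    unfolding N_def using component_le_norm_cart[of u i] by (metis abs_le_square_iff abs_norm_cancel)
  have umN: "um \<le> N" using um(2)[OF i1] cmp[of i1] by linarith
  have Np: "N > 0" using umN um by linarith
  define \<kappa> where "\<kappa> = N - um/2"
  have kap: "\<kappa> \<ge> 0" "\<kappa> \<le> N" using umN um by (auto simp: \<kappa>_def)
  define \<eta> where "\<eta> = e / (2*N)"
  have eta: "\<eta> > 0" using e Np by (simp add: \<eta>_def)
  define Au :: "real^'n^'n" where "Au = (\<chi> i j. \<eta> * (u$i * u$j - (if i = j \<and> i \<in> \<sigma> then \<kappa> else 0)))"
  have pert: "perturbation e Au" unfolding perturbation_def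
  proof (intro allI)
    fix i j
    have uu: "\<bar>u$i * u$j\<bar> \<le> N"
    proof -
      have "\<bar>u$i * u$j\<bar> \<le> norm u * norm u"
        unfolding abs_mult by (intro mult_mono component_le_norm_cart) auto
      then show ?thesis by (simp add: N_def power2_eq_square)
    qed
    have "\<bar>u$i * u$j - (if i = j \<and> i \<in> \<sigma> then \<kappa> else 0)\<bar> \<le> 2 * N" using uu kap zero_le_square[of "u$i"] zero_le_square[of "u$j"] by (auto simp: abs_le_iff)
    then have "\<bar>Au$i$j\<bar> \<le> \<eta> * (2*N)" using eta by (simp add: Au_def abs_mult)
    also have "\<dots> = e" using Np by (simp add: \<eta>_def)
    finally show "\<bar>Au$i$j\<bar> \<le> e" .
  qed
  define P where "P = (\<lambda>y::real^'n. \<chi> i. if i \<in> \<sigma> then y$i else 0)"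
  have Auv: "Au *v y = \<eta> *\<^sub>R ((u \<bullet> y) *\<^sub>R u - \<kappa> *\<^sub>R P y)" for y
  proof (subst vec_eq_iff, intro allI)
    fix i
    have "(Au *v y)$i = (\<Sum>j\<in>UNIV. \<eta> * u$i * (u$j * y$j) - (if j = i then \<eta> * (if i \<in> \<sigma> then \<kappa> else 0) * y$i else 0))"
      unfolding matrix_vector_mult_def by (auto simp: Au_def intro!: sum.cong simp: algebra_simps)
    also have "\<dots> = \<eta> * u$i * (u \<bullet> y) - \<eta> * (if i \<in> \<sigma> then \<kappa> else 0) * y$i"
      by (simp add: sum_subtractf inner_sum sum_distrib_left)
    finally show "(Au *v y)$i = (\<eta> *\<^sub>R ((u \<bullet> y) *\<^sub>R u - \<kappa> *\<^sub>R P y))$i"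
      by (cases "i \<in> \<sigma>") (simp_all add: P_def algebra_simps)
  qed
  have Mn: "(J + Au - D) *v y = - (v \<bullet> y) *\<^sub>R v + Au *v y" for y
  proof -
    have "J + Au - D = (J - D) + Au" by (simp add: algebra_simps)
    then have "(J + Au - D) *v y = (J - D) *v y + Au *v y" by (simp only: matrix_vector_mult_add_rdistrib)
    then show ?thesis by (simp only: rank1_mv[OF Mv])
  qed
  have uP: "u \<bullet> P y = u \<bullet> y" for y
    unfolding inner_sum by (rule sum.cong) (use us in \<open>auto simp: P_def\<close>)
  define lam where "lam = \<eta> * (um/2)"
  have lam: "lam > 0" using eta um by (simp add: lam_def)
  have eig: "u \<bullet> ((J + Au - D) *v y) = lam * (u \<bullet> y)" for y
  proof -
    have "u \<bullet> ((J + Au - D) *v y) = - (v \<bullet> y) * (u \<bullet> v) + \<eta> * ((u \<bullet> y) * N - \<kappa> * (u \<bullet> y))"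
      unfolding Mn Auv by (simp add: inner_add_right inner_diff_right uP N_def power2_norm_eq_inner)
    also have "\<dots> = lam * (u \<bullet> y)" using uv by (simp add: lam_def \<kappa>_def algebra_simps)
    finally show ?thesis .
  qed
  have u0: "u \<noteq> 0" using unz[OF i1] by auto
  have notly: "\<not> lyapunov_stable (J + Au) D b xs" if "supp xs = \<sigma>" for b xs
    by (rule eig_not_lyap[OF Dd Dp u0 us eig lam that])
  have uns: "unstable_set (J + Au) D \<sigma>"
    unfolding unstable_set_def marginal_set_def stable_set_def asymptotically_stable_def
    using notly i1 by blast
  have sub: "\<not> unstable_set (J + Au) D \<rho>" if r: "\<rho> \<subset> \<sigma>" for \<rho>
  proof (cases "\<rho> = {}")
    case True then show ?thesis by (simp add: unstable_set_def)
  next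
    case False
    obtain i0 where i0: "i0 \<in> \<sigma>" "i0 \<notin> \<rho>" using psubset_imp_ex_mem[OF r] by blast
    have nd: "y \<bullet> ((J + Au - D) *v y) \<le> - lam * (norm y)^2" if ys: "\<forall>i. i \<notin> \<rho> \<longrightarrow> y$i = 0" for y
    proof -
      have yP: "y \<bullet> P y = (norm y)^2"
        unfolding norm_sq_sum inner_sum by (rule sum.cong) (use ys r in \<open>auto simp: P_def power2_eq_square\<close>)
      define u' where "u' = (\<chi> i. if i = i0 then 0 else u$i)"
      have uy: "u \<bullet> y = u' \<bullet> y"
        unfolding inner_sum by (rule sum.cong) (use ys i0 in \<open>auto simp: u'_def\<close>)
      have nu': "(norm u')^2 = N - (u$i0)^2"
      proof -
        have "(\<Sum>i\<in>UNIV. (u$i)^2) = (\<Sum>i\<in>UNIV. (u'$i)^2 + (if i = i0 then (u$i0)^2 else 0))"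
          by (rule sum.cong) (auto simp: u'_def)
        then show ?thesis by (simp add: N_def norm_sq_sum sum.distrib)
      qed
      have "(u \<bullet> y)^2 \<le> (norm u')^2 * (norm y)^2"
      proof -
        have "\<bar>u' \<bullet> y\<bar> \<le> norm u' * norm y" by (rule Cauchy_Schwarz_ineq2)
        then have "\<bar>u' \<bullet> y\<bar>^2 \<le> (norm u' * norm y)^2" by (rule power_mono) simp
        then show ?thesis using uy by (simp add: power_mult_distrib)
      qed
      also have "\<dots> \<le> (N - um) * (norm y)^2"
        using nu' um(2)[OF i0(1)] by (intro mult_right_mono) auto
      finally have uyb: "(u \<bullet> y)^2 \<le> (N - um) * (norm y)^2" .
      have "y \<bullet> ((J + Au - D) *v y) = - ((v \<bullet> y)^2) + \<eta> * ((u \<bullet> y)^2 - \<kappa> * (norm y)^2)"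
        unfolding Mn Auv by (simp add: inner_add_right inner_diff_right yP power2_eq_square inner_commute algebra_simps)
      also have "\<dots> \<le> 0 + \<eta> * ((N - um) * (norm y)^2 - \<kappa> * (norm y)^2)"
        using uyb eta by (intro add_mono mult_left_mono) auto
      also have "\<dots> = - lam * (norm y)^2" by (simp add: lam_def \<kappa>_def algebra_simps)
      finally show ?thesis .
    qed
    have "stable_set (J + Au) D \<rho>" by (rule nd_stable[OF Dd Dp False lam nd])
    then show ?thesis by (simp add: unstable_set_def)
  qed
  show ?thesis using pert uns sub unfolding minimally_unstable_def by blast
qed




lemma single_quad:
  fixes A :: "real^'n^'n"
  assumes "\<forall>k. k \<noteq> i \<longrightarrow> y$k = 0"
  shows "y \<bullet> (A *v y) = A$i$i * (y$i)^2" and "(norm y)^2 = (y$i)^2"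
proof -
  have "y \<bullet> (A *v y) = (\<Sum>k\<in>UNIV. if k = i then A$i$i * (y$i)^2 else 0)"
  proof (unfold inner_sum, rule sum.cong)
    fix k
    have "(\<Sum>j\<in>UNIV. A$i$j * y$j) = (\<Sum>j\<in>UNIV. if j = i then A$i$i * y$i else 0)"
      by (rule sum.cong) (use assms in auto)
    then have "(A *v y)$i = A$i$i * y$i" by (simp add: matrix_vector_mult_def)
    then show "y$k * (A *v y)$k = (if k = i then A$i$i * (y$i)^2 else 0)"
      using assms by (auto simp: power2_eq_square)
  qed simp
  then show "y \<bullet> (A *v y) = A$i$i * (y$i)^2" by simp
  have "(\<Sum>k\<in>UNIV. (y$k)^2) = (\<Sum>k\<in>UNIV. if k = i then (y$i)^2 else 0)"
    by (rule sum.cong) (use assms in auto)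
  then show "(norm y)^2 = (y$i)^2" by (simp add: norm_sq_sum)
qed

lemma flexible_card:
  fixes J D :: "real^'n^'n"
  assumes net: "tln_network J D" and fl: "flexible_clique J D \<sigma>"
  shows "2 \<le> card \<sigma>"
proof -
  have Dd: "\<forall>i j. i \<noteq> j \<longrightarrow> D$i$j = 0" and Dp: "\<forall>i. D$i$i > 0" and neg: "\<forall>i. (J - D)$i$i < 0"
    using net unfolding tln_network_def by auto
  have ne: "\<sigma> \<noteq> {}"
  proof -
    obtain As Au where "maximally_stable (J + As) D \<sigma>"
      using fl unfolding flexible_clique_def using zero_less_one by blast
    then show ?thesis unfolding maximally_stable_def stable_set_def by blast
  qed
  have ns: "\<sigma> \<noteq> {i}" for i
  proof
    assume si: "\<sigma> = {i}"
    define e where "e = - (J - D)$i$i / 2"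
    have e: "e > 0" using neg by (simp add: e_def)
    obtain Au where pa: "perturbation e Au" and mu: "minimally_unstable (J + Au) D \<sigma>"
      using fl e unfolding flexible_clique_def by blast
    have nst: "\<not> stable_set (J + Au) D \<sigma>"
      using mu unfolding minimally_unstable_def unstable_set_def by blast
    have nd: "y \<bullet> ((J + Au - D) *v y) \<le> - e * (norm y)^2" if ys: "\<forall>k. k \<notin> \<sigma> \<longrightarrow> y$k = 0" for y
    proof -
      have ys': "\<forall>k. k \<noteq> i \<longrightarrow> y$k = 0" using ys si by auto
      have "(J + Au - D)$i$i = (J - D)$i$i + Au$i$i" by simp
      also have "\<dots> \<le> -e"
      proof -
        have "Au$i$i \<le> e" using pa abs_le_D1 unfolding perturbation_def by blast
        then show ?thesis unfolding e_def by linarith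
      qed
      finally have "(J + Au - D)$i$i * (y$i)^2 \<le> -e * (y$i)^2" by (rule mult_right_mono) simp
      then show ?thesis using single_quad[OF ys'] by simp
    qed
    have "stable_set (J + Au) D \<sigma>" by (rule nd_stable[OF Dd Dp _ e nd]) (simp add: si)
    then show False using nst by simp
  qed
  have "finite \<sigma>" by simp
  show ?thesis
  proof (rule ccontr)
    assume "\<not> 2 \<le> card \<sigma>"
    then have "card \<sigma> = 0 \<or> card \<sigma> = 1" by linarith
    then show False
    proof
      assume "card \<sigma> = 0" then show False using ne by simp
    next
      assume "card \<sigma> = 1" then obtain x where "\<sigma> = {x}" by (rule card_1_singletonE)
      then show False using ns by blast
    qed
  qed
qed

lemma count_ge2: "card {\<sigma>::'n::finite set. 2 \<le> card \<sigma>} = 2 ^ CARD('n) - CARD('n) - 1"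
proof -
  define A where "A = {\<sigma>::'n set. 2 \<le> card \<sigma>}"
  define B where "B = {{}} \<union> range (\<lambda>i::'n. {i})"
  have U: "(UNIV :: 'n set set) = A \<union> B"
  proof -
    have "\<sigma> \<in> A \<union> B" for \<sigma> :: "'n set"
    proof (cases "2 \<le> card \<sigma>")
      case True then show ?thesis by (simp add: A_def)
    next
      case False
      then have "card \<sigma> = 0 \<or> card \<sigma> = 1" by linarith
      then show ?thesis
      proof
        assume "card \<sigma> = 0" then show ?thesis by (simp add: B_def)
      next
        assume "card \<sigma> = 1" then obtain x where "\<sigma> = {x}" by (rule card_1_singletonE)
        then show ?thesis by (simp add: B_def)
      qed
    qed
    then show ?thesis by auto
  qed
  have disj: "A \<inter> B = {}" by (auto simp: A_def B_def)
  have cB: "card B = CARD('n) + 1"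
  proof -
    have "card (range (\<lambda>i::'n. {i})) = CARD('n)" by (rule card_image) (auto simp: inj_on_def)
    moreover have "{} \<notin> range (\<lambda>i::'n. {i})" by auto
    ultimately show ?thesis unfolding B_def by simp
  qed
  have "card (UNIV :: 'n set set) = 2 ^ CARD('n)"
    using card_Pow[of "UNIV :: 'n set"] by simp
  then have "card A + card B = 2 ^ CARD('n)" using U disj
    using card_Un_disjoint[OF finite finite disj] by simp
  then show ?thesis unfolding A_def[symmetric] using cB by simp
qed




theorem mainTheorem17:
  fixes J D :: "real^'n^'n"
  assumes "tln_network J D"
    and "transpose (J - D) = J - D"
    and "rank (J - D) = 1"
  shows "maximally_flexible J D \<and> flexibility J D = 2 ^ CARD('n) - CARD('n) - 1"
proof -
  note net = assms(1)
  have Dd: "\<forall>i j. i \<noteq> j \<longrightarrow> D$i$j = 0" and Dp: "\<forall>i. D$i$i > 0" and neg: "\<forall>i. (J - D)$i$i < 0"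
    using net unfolding tln_network_def by auto
  obtain v where v: "\<forall>i. v$i \<noteq> 0" and Mv: "\<forall>i j. (J - D)$i$j = -(v$i * v$j)"
    using rank1_sym[OF assms(2,3) neg] by blast
  have flex: "flexible_clique J D \<sigma> \<longleftrightarrow> 2 \<le> card \<sigma>" for \<sigma>
  proof
    assume "flexible_clique J D \<sigma>" then show "2 \<le> card \<sigma>" by (rule flexible_card[OF net])
  next
    assume c2: "2 \<le> card \<sigma>"
    then have "\<sigma> \<noteq> {}" by auto
    then obtain i1 where i1: "i1 \<in> \<sigma>" by blast
    show "flexible_clique J D \<sigma>" unfolding flexible_clique_def
    proof (intro allI impI)
      fix e :: real assume e: "e > 0"
      obtain As where "perturbation e As" "maximally_stable (J + As) D \<sigma>"
        using as_max_stable[OF Dd Dp v Mv i1 e] by blast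
      moreover obtain Au where "perturbation e Au" "minimally_unstable (J + Au) D \<sigma>"
        using au_min_unstable[OF Dd Dp v Mv i1 c2 e] by blast
      ultimately show "\<exists>As Au. perturbation e As \<and> perturbation e Au \<and>
          maximally_stable (J + As) D \<sigma> \<and> minimally_unstable (J + Au) D \<sigma>" by blast
    qed
  qed
  have fJ: "flexibility J D = card {\<sigma>::'n set. 2 \<le> card \<sigma>}"
    unfolding flexibility_def using flex by (metis (mono_tags, lifting) Collect_cong)
  have bound: "flexibility J' D' \<le> card {\<sigma>::'n set. 2 \<le> card \<sigma>}" if "tln_network J' D'" for J' D' :: "real^'n^'n"
    unfolding flexibility_def
    by (rule card_mono) (auto intro: flexible_card[OF that])
  define S where "S = {flexibility J' D' | (J' :: real^'n^'n) D'. tln_network J' D'}"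
  have "Max S = flexibility J D"
  proof (rule Max_eqI)
    show "finite S"
      by (rule finite_subset[of _ "{..card {\<sigma>::'n set. 2 \<le> card \<sigma>}}"]) (auto simp: S_def intro: bound)
    show "y \<le> flexibility J D" if "y \<in> S" for y using that bound fJ by (auto simp: S_def)
    show "flexibility J D \<in> S" using net by (auto simp: S_def)
  qed
  then have "maximally_flexible J D" unfolding maximally_flexible_def S_def using net by simp
  then show ?thesis using fJ count_ge2 by simp
qed


end
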